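(* For every MTL sentence $\phi$ (whose atomic propositions are taken to be nullary fluent predicates): $\models_{\mathrm{MTL}}\phi$ iff $\models_{\text{t-ESG}}\phi$.
   Context: The logic t-ESG (relevant fragment). Action standard names $\mathcal N_A$ (countably infinite); fluent predicate symbols including nullary ones. Timed traces are finite or infinite sequences $t_1p_1t_2p_2\cdots$ with non-decreasing $t_i\in\mathbb R_{\ge0}$ and $p_i\in\mathcal N_A$; $\mathcal T$ denotes the set of all timed traces; $(p_1,t_1)\cdots(p_k,t_k)$ denotes $t_1p_1\cdots t_kp_k$; $\mathrm{time}(z)=t_k$ for such $z$, $\mathrm{time}(\langle\rangle)=0$. A t-ESG world $w$ assigns in particular to each primitive formula $F(\vec n)$ and each finite trace $z$ a truth value $w[F(\vec n),z]\in\{0,1\}$ (it also assigns values to terms and clocks subject to rigidity, unique-names and clock-progression constraints that impose no restriction on the truth values of fluent predicates). Trace formulas: atoms $F$ (nullary fluents), $\neg$, $\wedge$, and $\phi\,\mathcal U_I\,\psi$ with $I$ an open/closed/half-closed interval with natural-number (or $\infty$) endpoints. Truth: $w,z,\tau\models F$ iff $w[F,z]=1$; Boolean connectives usual; $w,z,\tau\models\phi\,\mathcal U_I\,\psi$ iff there are $\tau'\in\mathcal T$ and nonempty finite $z_1=(p_1,t_1)\cdots(p_k,t_k)$ with $\tau=z_1\tau'$, $w,zz_1,\tau'\models\psi$, $\mathrm{time}(z_1)\in\mathrm{time}(z)+I$, and $w,zz_2,z_3\tau'\models\phi$ for all splits $z_1=z_2z_3$ into nonempty time–action sequences. $\models_{\text{t-ESG}}\phi$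 means $w,\langle\rangle,\tau\models\phi$ for every world $w$ and every $\tau\in\mathcal T$. MTL (pointwise semantics): formulas over propositions $P$: $p$, $\neg\phi$, $\phi\wedge\psi$, $\phi\,\mathcal U_I\,\psi$. A timed word is a finite or infinite sequence $\rho=(\rho_0,t_0)(\rho_1,t_1)\cdots$, $\rho_i\subseteq P$, $t_0=0$, non-decreasing $t_i\in\mathbb R_{\ge0}$. $\rho,i\models p$ iff $p\in\rho_i$; Boolean connectives usual; $\rho,i\models\phi\,\mathcal U_I\,\psi$ iff there is $j$ with $i<j<|\rho|$, $\rho,j\models\psi$, $t_j-t_i\in I$, and $\rho,m\models\phi$ for all $i<m<j$. $\models_{\mathrm{MTL}}\phi$ means $\rho,0\models\phi$ for every timed word $\rho$. *)

theory Defs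
  imports Complex_Main "HOL-Library.Extended_Nat"
begin

text \<open>Intv l lc u uc: lower endpoint l (closed iff lc), upper endpoint u
  (None = infinity; closed iff uc, the flag being ignored for infinity).\<close>
datatype interval = Intv nat bool "nat option" bool

fun in_interval :: "real \<Rightarrow> interval \<Rightarrow> bool" where
  "in_interval x (Intv l lc u uc) =
     ((if lc then real l \<le> x else real l < x) \<and>
      (case u of None \<Rightarrow> True | Some b \<Rightarrow> (if uc then x \<le> real b else x < real b)))"

datatype 'p form =
    Atom 'p
  | Neg "'p form"
  | Conj "'p form" "'p form"
  | Until interval "'p form" "'p form"

datatype 'a tseq = Fin "'a list" | Inf "nat \<Rightarrow> 'a"

fun slen :: "'a tseq \<Rightarrow> enat" where
  "slen (Fin xs) = enat (length xs)"
| "slen (Inf f) = \<infinity>"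

fun snth :: "'a tseq \<Rightarrow> nat \<Rightarrow> 'a" where
  "snth (Fin xs) i = xs ! i"
| "snth (Inf f) i = f i"

fun sconc :: "'a list \<Rightarrow> 'a tseq \<Rightarrow> 'a tseq" where
  "sconc zs (Fin xs) = Fin (zs @ xs)"
| "sconc zs (Inf f) = Inf (\<lambda>i. if i < length zs then zs ! i else f (i - length zs))"

type_synonym 'p timed_word = "('p set \<times> real) tseq"

definition timed_word :: "'p timed_word \<Rightarrow> bool" where
  "timed_word \<rho> \<longleftrightarrow> 0 < slen \<rho> \<and> snd (snth \<rho> 0) = 0 \<and>
     (\<forall>i j. i \<le> j \<and> enat j < slen \<rho> \<longrightarrow> snd (snth \<rho> i) \<le> snd (snth \<rho> j))"

fun mtl_sat :: "'p timed_word \<Rightarrow> nat \<Rightarrow> 'p form \<Rightarrow> bool" where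
  "mtl_sat \<rho> i (Atom p) = (p \<in> fst (snth \<rho> i))"
| "mtl_sat \<rho> i (Neg \<phi>) = (\<not> mtl_sat \<rho> i \<phi>)"
| "mtl_sat \<rho> i (Conj \<phi> \<psi>) = (mtl_sat \<rho> i \<phi> \<and> mtl_sat \<rho> i \<psi>)"
| "mtl_sat \<rho> i (Until I \<phi> \<psi>) =
     (\<exists>j. i < j \<and> enat j < slen \<rho> \<and> mtl_sat \<rho> j \<psi> \<and>
          in_interval (snd (snth \<rho> j) - snd (snth \<rho> i)) I \<and>
          (\<forall>m. i < m \<and> m < j \<longrightarrow> mtl_sat \<rho> m \<phi>))"

definition mtl_valid :: "'p form \<Rightarrow> bool" where
  "mtl_valid \<phi> \<longleftrightarrow> (\<forall>\<rho>. timed_word \<rho> \<longrightarrow> mtl_sat \<rho> 0 \<phi>)"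

text \<open>Action standard names are modelled by nat (countably infinite).
  A timed trace is a finite or infinite sequence of pairs (p_i, t_i).\<close>
type_synonym ftrace = "(nat \<times> real) list"
type_synonym ttrace = "(nat \<times> real) tseq"

definition is_ttrace :: "ttrace \<Rightarrow> bool" where
  "is_ttrace \<tau> \<longleftrightarrow> (\<forall>i j. i \<le> j \<and> enat j < slen \<tau> \<longrightarrow>
      0 \<le> snd (snth \<tau> i) \<and> snd (snth \<tau> i) \<le> snd (snth \<tau> j))"

definition traces :: "ttrace set" where
  "traces = {\<tau>. is_ttrace \<tau>}"

definition time :: "ftrace \<Rightarrow> real" where
  "time z = (if z = [] then 0 else snd (last z))"

text \<open>The relevant part of a world: truth values of nullary fluents after finite traces.\<close>
type_synonym 'p world = "'p \<Rightarrow> ftrace \<Rightarrow> bool"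

fun esg_sat :: "'p world \<Rightarrow> ftrace \<Rightarrow> ttrace \<Rightarrow> 'p form \<Rightarrow> bool" where
  "esg_sat w z \<tau> (Atom F) = w F z"
| "esg_sat w z \<tau> (Neg \<phi>) = (\<not> esg_sat w z \<tau> \<phi>)"
| "esg_sat w z \<tau> (Conj \<phi> \<psi>) = (esg_sat w z \<tau> \<phi> \<and> esg_sat w z \<tau> \<psi>)"
| "esg_sat w z \<tau> (Until I \<phi> \<psi>) =
     (\<exists>\<tau>' z1. \<tau>' \<in> traces \<and> z1 \<noteq> [] \<and> \<tau> = sconc z1 \<tau>' \<and>
        esg_sat w (z @ z1) \<tau>' \<psi> \<and> in_interval (time z1 - time z) I \<and>
        (\<forall>z2 z3. z1 = z2 @ z3 \<and> z2 \<noteq> [] \<and> z3 \<noteq> [] \<longrightarrow>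
           esg_sat w (z @ z2) (sconc z3 \<tau>') \<phi>))"

definition esg_valid :: "'p form \<Rightarrow> bool" where
  "esg_valid \<phi> \<longleftrightarrow> (\<forall>(w :: 'p world) \<tau>. \<tau> \<in> traces \<longrightarrow> esg_sat w [] \<tau> \<phi>)"

end

theory Submission
  imports Defs
begin

fun tstake :: "nat \<Rightarrow> 'a tseq \<Rightarrow> 'a list" where
  "tstake n (Fin xs) = take n xs"
| "tstake n (Inf f) = map f [0..<n]"

fun tsdrop :: "nat \<Rightarrow> 'a tseq \<Rightarrow> 'a tseq" where
  "tsdrop n (Fin xs) = Fin (drop n xs)"
| "tsdrop n (Inf f) = Inf (\<lambda>i. f (i + n))"

lemma sconc_take_drop: "enat n \<le> slen X \<Longrightarrow> sconc (tstake n X) (tsdrop n X) = X"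
  by (cases X) (auto intro!: ext)

lemma tstake_sconc: "m \<le> length zs \<Longrightarrow> tstake m (sconc zs t) = take m zs"
  by (cases t) (auto intro!: nth_equalityI)

lemma tsdrop_sconc: "m \<le> length zs \<Longrightarrow> tsdrop m (sconc zs t) = sconc (drop m zs) t"
  by (cases t) (auto intro!: ext simp: less_diff_conv add.commute)

lemma sconc_Nil[simp]: "sconc [] t = t"
  by (cases t) auto

lemma slen_sconc: "slen (sconc zs t) = enat (length zs) + slen t"
  by (cases t) auto

lemma tstake_add: "tstake (i + k) X = tstake i X @ tstake k (tsdrop i X)"
  by (cases X) (auto simp: take_add nth_append intro!: nth_equalityI)

lemma tsdrop_add: "tsdrop k (tsdrop i X) = tsdrop (i + k) X"
  by (cases X) (auto simp: add.commute add.left_commute)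

lemma tstake_0[simp]: "tstake 0 X = []"
  by (cases X) auto

lemma tsdrop_0[simp]: "tsdrop 0 X = X"
  by (cases X) auto

lemma length_tstake: "enat n \<le> slen X \<Longrightarrow> length (tstake n X) = n"
  by (cases X) auto

lemma last_tstake: "enat (Suc n) \<le> slen X \<Longrightarrow> last (tstake (Suc n) X) = snth X n"
  by (cases X) (auto simp: take_Suc_conv_app_nth)

lemma snth_tsdrop: "enat (n + i) < slen X \<Longrightarrow> snth (tsdrop i X) n = snth X (n + i)"
  by (cases X) (auto simp: add.commute)

lemma slen_tsdrop: "slen (tsdrop i X) = slen X - enat i"
  by (cases X) auto

lemma tsdrop_traces: "X \<in> traces \<Longrightarrow> tsdrop i X \<in> traces"
  unfolding traces_def is_ttrace_def
proof (clarify)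
  fix a b
  assume H: "\<forall>a b. a \<le> b \<and> enat b < slen X \<longrightarrow> 0 \<le> snd (snth X a) \<and> snd (snth X a) \<le> snd (snth X b)"
    and ab: "a \<le> b" "enat b < slen (tsdrop i X)"
  have b: "enat (b + i) < slen X" using ab(2) by (cases X) auto
  have a: "enat (a + i) < slen X" using b ab(1) by (meson add_le_mono1 enat_ord_simps(1) le_less_trans)
  show "0 \<le> snd (snth (tsdrop i X) a) \<and> snd (snth (tsdrop i X) a) \<le> snd (snth (tsdrop i X) b)"
    using H[rule_format, of "a+i" "b+i"] ab(1) a b by (simp add: snth_tsdrop)
qed

lemma time_append: "ys \<noteq> [] \<Longrightarrow> time (xs @ ys) = time ys"
  by (simp add: time_def)


lemma correspondence:
  fixes \<rho> :: "'p timed_word" and T :: ttrace and w :: "'p world"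
  assumes H1: "slen \<rho> = eSuc (slen T)"
    and H2: "snd (snth \<rho> 0) = 0"
    and H3: "\<And>n. enat n < slen T \<Longrightarrow> snd (snth \<rho> (Suc n)) = snd (snth T n)"
    and H4: "\<And>n p. enat n < slen \<rho> \<Longrightarrow> (p \<in> fst (snth \<rho> n) \<longleftrightarrow> w p (tstake n T))"
    and H5: "T \<in> traces"
  shows "enat i < slen \<rho> \<Longrightarrow> mtl_sat \<rho> i \<phi> \<longleftrightarrow> esg_sat w (tstake i T) (tsdrop i T) \<phi>"
proof (induction \<phi> arbitrary: i)
  case (Atom x)
  then show ?case using H4 by simp
next
  case (Neg \<phi>)
  then show ?case by simp
next
  case (Conj \<phi>1 \<phi>2)
  then show ?case by simp
next
  case (Until I \<phi> \<psi>)
  have lt: "\<And>n. enat n < slen \<rho> \<longleftrightarrow> enat n \<le> slen T"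
    using H1 by (metis Suc_ile_eq eSuc_enat ileI1 order_le_less_trans iless_Suc_eq)
  have time: "time (tstake n T) = snd (snth \<rho> n)" if "enat n < slen \<rho>" for n
  proof (cases n)
    case 0 then show ?thesis using H2 by (simp add: time_def)
  next
    case (Suc n')
    have le: "enat (Suc n') \<le> slen T" using that Suc lt by simp
    have "tstake n T \<noteq> []" using length_tstake[OF le] Suc by auto
    then have "time (tstake n T) = snd (snth T n')"
      using last_tstake[OF le] Suc by (simp add: time_def)
    also have "\<dots> = snd (snth \<rho> n)" using H3[of n'] le Suc
      by (metis Suc_ile_eq)
    finally show ?thesis .
  qed
  define z where "z = tstake i T"
  define Y where "Y = tsdrop i T"
  have iT: "enat i \<le> slen T" using Until.prems lt by simp
  have slenY: "slen Y = slen T - enat i" unfolding Y_def by (rule slen_tsdrop)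
  have stk: "tstake (i + k) T = z @ tstake k Y" for k
    unfolding z_def Y_def by (rule tstake_add)
  have sdr: "tsdrop k Y = tsdrop (i + k) T" for k
    unfolding Y_def by (rule tsdrop_add)
  have kY: "enat k \<le> slen Y \<longleftrightarrow> enat (i + k) \<le> slen T" for k
    using iT unfolding slenY by (cases "slen T") auto
  show ?case
  proof
    assume "mtl_sat \<rho> i (Until I \<phi> \<psi>)"
    then obtain j where j: "i < j" "enat j < slen \<rho>" "mtl_sat \<rho> j \<psi>"
      "in_interval (snd (snth \<rho> j) - snd (snth \<rho> i)) I"
      "\<forall>m. i < m \<and> m < j \<longrightarrow> mtl_sat \<rho> m \<phi>" by auto
    define k where "k = j - i"
    have jk: "j = i + k" using j(1) k_def by simp
    have kle: "enat k \<le> slen Y" using kY j(2) lt jk by simp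
    define z1 where "z1 = tstake k Y"
    define \<tau>' where "\<tau>' = tsdrop k Y"
    have Yeq: "Y = sconc z1 \<tau>'" unfolding z1_def \<tau>'_def using sconc_take_drop[OF kle] by simp
    have lz1: "length z1 = k" unfolding z1_def using length_tstake[OF kle] .
    have z1ne: "z1 \<noteq> []" using lz1 j(1) k_def by auto
    have tr: "\<tau>' \<in> traces" unfolding \<tau>'_def sdr using tsdrop_traces[OF H5] .
    have zz1: "z @ z1 = tstake j T" using stk[of k] jk z1_def by simp
    have t': "\<tau>' = tsdrop j T" using sdr[of k] jk \<tau>'_def by simp
    have psi: "esg_sat w (z @ z1) \<tau>' \<psi>" using Until.IH(2)[OF j(2)] j(3) zz1 t' by simp
    have tm: "time z1 - time z = snd (snth \<rho> j) - snd (snth \<rho> i)"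
      using time_append[OF z1ne, of z] zz1 time[OF j(2)] time[OF Until.prems] z_def by simp
    have spl: "esg_sat w (z @ z2) (sconc z3 \<tau>') \<phi>"
      if s: "z1 = z2 @ z3" "z2 \<noteq> []" "z3 \<noteq> []" for z2 z3
    proof -
      define m' where "m' = length z2"
      have m'k: "m' < k" "0 < m'" using s lz1 m'_def by auto
      have "tstake m' Y = z2" using Yeq tstake_sconc[of m' z1 \<tau>'] s m'_def by simp
      then have a: "z @ z2 = tstake (i + m') T" using stk by simp
      have "tsdrop m' Y = sconc z3 \<tau>'" using Yeq tsdrop_sconc[of m' z1 \<tau>'] s m'_def by simp
      then have b: "sconc z3 \<tau>' = tsdrop (i + m') T" using sdr by simp
      have mlt: "enat (i + m') < slen \<rho>" using j(2) m'k jk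
        by (meson add_less_cancel_left enat_ord_simps(2) order.strict_trans)
      have "mtl_sat \<rho> (i + m') \<phi>" using j(5) m'k jk by simp
      then show ?thesis using Until.IH(1)[OF mlt] a b by simp
    qed
    show "esg_sat w (tstake i T) (tsdrop i T) (Until I \<phi> \<psi>)"
      unfolding z_def[symmetric] Y_def[symmetric] esg_sat.simps
      using tr z1ne Yeq psi tm j(4) spl by metis
  next
    assume "esg_sat w (tstake i T) (tsdrop i T) (Until I \<phi> \<psi>)"
    then obtain \<tau>' z1 where e: "\<tau>' \<in> traces" "z1 \<noteq> []" "Y = sconc z1 \<tau>'"
      "esg_sat w (z @ z1) \<tau>' \<psi>" "in_interval (time z1 - time z) I"
      "\<forall>z2 z3. z1 = z2 @ z3 \<and> z2 \<noteq> [] \<and> z3 \<noteq> [] \<longrightarrow> esg_sat w (z @ z2) (sconc z3 \<tau>') \<phi>"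
      unfolding z_def Y_def by auto
    define k where "k = length z1"
    define j where "j = i + k"
    have kpos: "0 < k" using e(2) k_def by auto
    have tk: "tstake k Y = z1" using e(3) tstake_sconc[of k z1 \<tau>'] k_def by simp
    have dk: "tsdrop k Y = \<tau>'" using e(3) tsdrop_sconc[of k z1 \<tau>'] k_def by simp
    have "enat k \<le> slen Y" using e(3) slen_sconc[of z1 \<tau>'] k_def by simp
    then have jlt: "enat j < slen \<rho>" using kY lt j_def by simp
    have zz1: "z @ z1 = tstake j T" using stk[of k] tk j_def by simp
    have t': "\<tau>' = tsdrop j T" using sdr[of k] dk j_def by simp
    have psi: "mtl_sat \<rho> j \<psi>" using Until.IH(2)[OF jlt] e(4) zz1 t' by simp
    have tm: "time z1 - time z = snd (snth \<rho> j) - snd (snth \<rho> i)"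
      using time_append[OF e(2), of z] zz1 time[OF jlt] time[OF Until.prems] z_def by simp
    have phi: "mtl_sat \<rho> m \<phi>" if m: "i < m" "m < j" for m
    proof -
      define m' where "m' = m - i"
      define z2 where "z2 = take m' z1"
      define z3 where "z3 = drop m' z1"
      have m'k: "0 < m'" "m' < k" using m m'_def j_def by auto
      have s: "z1 = z2 @ z3" "z2 \<noteq> []" "z3 \<noteq> []" using m'k k_def z2_def z3_def by auto
      have "tstake m' Y = z2" using e(3) tstake_sconc[of m' z1 \<tau>'] m'k k_def z2_def by simp
      then have a: "z @ z2 = tstake m T" using stk[of m'] m m'_def by simp
      have "tsdrop m' Y = sconc z3 \<tau>'" using e(3) tsdrop_sconc[of m' z1 \<tau>'] m'k k_def z3_def by simp
      then have b: "sconc z3 \<tau>' = tsdrop m T" using sdr[of m'] m m'_def by simp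
      have mlt: "enat m < slen \<rho>" using jlt m
        by (meson enat_ord_simps(2) order.strict_trans)
      show ?thesis using Until.IH(1)[OF mlt] e(6)[rule_format, of z2 z3] s a b by simp
    qed
    show "mtl_sat \<rho> i (Until I \<phi> \<psi>)"
      unfolding mtl_sat.simps
      by (rule exI[of _ j]) (use j_def kpos jlt psi e(5) tm phi in auto)
  qed
qed

theorem mainTheorem10:
  fixes \<phi> :: "'p form"
  shows "mtl_valid \<phi> \<longleftrightarrow> esg_valid \<phi>"
proof
  assume V: "mtl_valid \<phi>"
  show "esg_valid \<phi>"
    unfolding esg_valid_def
  proof (intro allI impI)
    fix w :: "'p world" and T :: ttrace
    assume T: "T \<in> traces"
    define g where "g n = ({p. w p (tstake n T)}, if n = 0 then 0 else snd (snth T (n - 1)))" for n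
    define \<rho> where "\<rho> = (case T of Fin xs \<Rightarrow> Fin (map g [0..<Suc (length xs)]) | Inf f \<Rightarrow> Inf g)"
    have sl: "slen \<rho> = eSuc (slen T)" unfolding \<rho>_def by (cases T) (auto simp: eSuc_enat)
    have sn: "snth \<rho> n = g n" if "enat n < slen \<rho>" for n
      using that unfolding \<rho>_def by (cases T) (auto simp del: upt_Suc)
    have lt: "\<And>n. enat n < slen \<rho> \<longleftrightarrow> enat n \<le> slen T"
      using sl by (metis Suc_ile_eq eSuc_enat ileI1 order_le_less_trans iless_Suc_eq)
    have pos: "0 < slen \<rho>" using sl by simp
    have TT: "\<forall>i j. i \<le> j \<and> enat j < slen T \<longrightarrow> 0 \<le> snd (snth T i) \<and> snd (snth T i) \<le> snd (snth T j)"
      using T unfolding traces_def is_ttrace_def by simp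
    have tw: "timed_word \<rho>"
      unfolding timed_word_def
    proof (intro conjI allI impI)
      show "0 < slen \<rho>" by (rule pos)
      show "snd (snth \<rho> 0) = 0" using sn[OF pos[unfolded zero_enat_def]] g_def by (simp add: zero_enat_def)
      fix i j assume ij: "i \<le> j \<and> enat j < slen \<rho>"
      have il: "enat i < slen \<rho>" using ij by (meson enat_ord_simps(1) le_less_trans)
      show "snd (snth \<rho> i) \<le> snd (snth \<rho> j)"
      proof (cases "j = 0")
        case True then show ?thesis using ij by simp
      next
        case False
        have jT: "enat (j - 1) < slen T" using ij lt False
          by (metis Suc_ile_eq Suc_pred' not_gr_zero)
        show ?thesis
        proof (cases "i = 0")
          case True then show ?thesis using sn[OF il] sn[of j] ij g_def False TT jT by auto
        next
          case False
          then show ?thesis using sn[OF il] sn[of j] ij g_def TT jT \<open>j \<noteq> 0\<close> by auto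
        qed
      qed
    qed
    have H3: "snd (snth \<rho> (Suc n)) = snd (snth T n)" if "enat n < slen T" for n
      using sn[of "Suc n"] that lt g_def by (simp add: Suc_ile_eq)
    have H4: "p \<in> fst (snth \<rho> n) \<longleftrightarrow> w p (tstake n T)" if "enat n < slen \<rho>" for n p
      using sn[OF that] g_def by simp
    have H2: "snd (snth \<rho> 0) = 0" using tw unfolding timed_word_def by simp
    have "mtl_sat \<rho> 0 \<phi>" using V tw unfolding mtl_valid_def by simp
    then show "esg_sat w [] T \<phi>"
      using correspondence[of \<rho> T w 0 \<phi>, OF sl H2 H3 H4 T] pos by (simp add: zero_enat_def)
  qed
next
  assume V: "esg_valid \<phi>"
  show "mtl_valid \<phi>"
    unfolding mtl_valid_def
  proof (intro allI impI)
    fix \<rho> :: "'p timed_word"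
    assume tw: "timed_word \<rho>"
    define T :: ttrace where "T = (case \<rho> of Fin xs \<Rightarrow> Fin (map (\<lambda>x. (0, snd x)) (tl xs)) | Inf f \<Rightarrow> Inf (\<lambda>n. (0, snd (f (Suc n)))))"
    define w :: "'p world" where "w p z = (p \<in> fst (snth \<rho> (length z)))" for p z
    have pos: "0 < slen \<rho>" and H2: "snd (snth \<rho> 0) = 0"
      and mono: "\<And>i j. i \<le> j \<Longrightarrow> enat j < slen \<rho> \<Longrightarrow> snd (snth \<rho> i) \<le> snd (snth \<rho> j)"
      using tw unfolding timed_word_def by auto
    have sl: "slen \<rho> = eSuc (slen T)" using pos unfolding T_def
      by (cases \<rho>) (auto simp: eSuc_enat zero_enat_def)
    have lt: "\<And>n. enat n < slen \<rho> \<longleftrightarrow> enat n \<le> slen T"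
      using sl by (metis Suc_ile_eq eSuc_enat ileI1 order_le_less_trans iless_Suc_eq)
    have sn: "snth T n = (0, snd (snth \<rho> (Suc n)))" if "enat n < slen T" for n
      using that unfolding T_def by (cases \<rho>) (auto simp: nth_tl)
    have H3: "snd (snth \<rho> (Suc n)) = snd (snth T n)" if "enat n < slen T" for n
      using sn[OF that] by simp
    have H4: "p \<in> fst (snth \<rho> n) \<longleftrightarrow> w p (tstake n T)" if "enat n < slen \<rho>" for n p
      using length_tstake[of n T] that lt w_def by simp
    have TT: "T \<in> traces"
      unfolding traces_def is_ttrace_def
    proof (intro CollectI allI impI)
      fix i j assume ij: "i \<le> j \<and> enat j < slen T"
      have il: "enat i < slen T" using ij by (meson enat_ord_simps(1) le_less_trans)
      have jr: "enat (Suc j) < slen \<rho>" using ij lt by (simp add: Suc_ile_eq)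
      have ir: "enat (Suc i) < slen \<rho>" using il lt by (simp add: Suc_ile_eq)
      have "0 \<le> snd (snth \<rho> (Suc i))" using mono[of 0 "Suc i"] H2 ir by simp
      moreover have "snd (snth \<rho> (Suc i)) \<le> snd (snth \<rho> (Suc j))" using mono ij jr by simp
      ultimately show "0 \<le> snd (snth T i) \<and> snd (snth T i) \<le> snd (snth T j)"
        using H3[OF il] H3[of j] ij by simp
    qed
    have "esg_sat w [] T \<phi>" using V TT unfolding esg_valid_def by simp
    then show "mtl_sat \<rho> 0 \<phi>"
      using correspondence[of \<rho> T w 0 \<phi>, OF sl H2 H3 H4 TT] pos by (simp add: zero_enat_def)
  qed
qed

end
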